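(* Let $X, B_1, \dots, B_n$ be $d\times d$ symmetric positive definite matrices and let $\phi(\alpha) := \delta_R^2\big(\sum_{i=1}^n \alpha_i B_i, X\big)$ for $\alpha \in \mathbb{R}^n$. Then $\phi$ is convex on the set $$\mathcal{A} := \Big\{\alpha \in \mathbb{R}^n \;\Big|\; \sum_{i=1}^n \alpha_i B_i \preceq X \text{ and } \alpha \ge 0\Big\}.$$
   Context: For symmetric positive definite $X, Y$, $\delta_R(X,Y) = \|\log(X^{-1/2} Y X^{-1/2})\|_F$ with $\log$ the principal matrix logarithm and $\|\cdot\|_F$ the Frobenius norm; $\phi(\alpha)$ is defined when $\sum_i \alpha_i B_i$ is positive definite. $\preceq$ denotes the Löwner order ($A \preceq B$ iff $B - A$ is positive semidefinite), and $\alpha \ge 0$ means entrywise nonnegativity. *)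

theory Defs
  imports "HOL-Analysis.Analysis"
begin

text \<open>Square real matrices are represented as real^'d^'d; the (Euclidean)
norm on this type is exactly the Frobenius norm.\<close>

definition sym_mat :: "real^'d^'d \<Rightarrow> bool" where
  "sym_mat A \<longleftrightarrow> transpose A = A"

definition pos_def :: "real^'d^'d \<Rightarrow> bool" where
  "pos_def A \<longleftrightarrow> sym_mat A \<and> (\<forall>x. x \<noteq> 0 \<longrightarrow> x \<bullet> (A *v x) > 0)"

definition pos_semidef :: "real^'d^'d \<Rightarrow> bool" where
  "pos_semidef A \<longleftrightarrow> sym_mat A \<and> (\<forall>x. x \<bullet> (A *v x) \<ge> 0)"

definition loewner_le :: "real^'d^'d \<Rightarrow> real^'d^'d \<Rightarrow> bool" where
  "loewner_le A B \<longleftrightarrow> pos_semidef (B - A)"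

fun mat_pow :: "real^'d^'d \<Rightarrow> nat \<Rightarrow> real^'d^'d" where
  "mat_pow A 0 = mat 1"
| "mat_pow A (Suc k) = A ** mat_pow A k"

definition mat_exp :: "real^'d^'d \<Rightarrow> real^'d^'d" where
  "mat_exp L = (\<Sum>k. (1 / fact k) *\<^sub>R mat_pow L k)"

definition mat_log :: "real^'d^'d \<Rightarrow> real^'d^'d" where
  "mat_log A = (THE L. sym_mat L \<and> mat_exp L = A)"

definition mat_sqrt :: "real^'d^'d \<Rightarrow> real^'d^'d" where
  "mat_sqrt A = (THE S. pos_def S \<and> S ** S = A)"

definition delta_R :: "real^'d^'d \<Rightarrow> real^'d^'d \<Rightarrow> real" where
  "delta_R X Y = norm (mat_log (matrix_inv (mat_sqrt X) ** Y ** matrix_inv (mat_sqrt X)))"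

end

theory Submission
  imports Defs
begin

definition outer :: "real^'d \<Rightarrow> real^'d^'d" where "outer v = (\<chi> i j. v$i * v$j)"

lemma outer_mult: "outer v *v x = (v \<bullet> x) *\<^sub>R v"
  by (simp add: outer_def matrix_vector_mult_def inner_vec_def vec_eq_iff sum_distrib_left sum_distrib_right algebra_simps)

definition onb :: "(real^'d) set \<Rightarrow> bool" where
  "onb E \<longleftrightarrow> pairwise orthogonal E \<and> (\<forall>e\<in>E. norm e = 1) \<and> span E = UNIV"

lemma onb_finite: "onb E \<Longrightarrow> finite E"
  unfolding onb_def
  by (metis independent_imp_finite norm_zero pairwise_orthogonal_independent zero_neq_one)

lemma onb_inner: "onb E \<Longrightarrow> e \<in> E \<Longrightarrow> f \<in> E \<Longrightarrow> e \<bullet> f = (if e = f then 1 else 0)"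
  unfolding onb_def pairwise_def orthogonal_def
  by (metis norm_eq_1)

lemma onb_expand:
  assumes "onb E" shows "x = (\<Sum>e\<in>E. (e \<bullet> x) *\<^sub>R e)"
proof -
  have fin: "finite E" using onb_finite[OF assms] .
  define y where "y = x - (\<Sum>e\<in>E. (e \<bullet> x) *\<^sub>R e)"
  have "orthogonal y f" if "f \<in> E" for f
  proof -
    have "f \<bullet> (\<Sum>e\<in>E. (e \<bullet> x) *\<^sub>R e) = (\<Sum>e\<in>E. (e \<bullet> x) * (f \<bullet> e))"
      by (simp only: inner_sum_right inner_scaleR_right)
    also have "\<dots> = (\<Sum>e\<in>E. if e = f then f \<bullet> x else 0)"
    proof (rule sum.cong[OF refl])
      fix e assume "e \<in> E"
      then have "f \<bullet> e = (if f = e then 1 else 0)" using onb_inner[OF assms that] by blast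
      then show "(e \<bullet> x) * (f \<bullet> e) = (if e = f then f \<bullet> x else 0)" by auto
    qed
    also have "\<dots> = f \<bullet> x" using fin that by (simp add: sum.delta)
    finally have "f \<bullet> (\<Sum>e\<in>E. (e \<bullet> x) *\<^sub>R e) = f \<bullet> x" .
    then have "f \<bullet> y = 0" unfolding y_def inner_diff_right by simp
    then show ?thesis unfolding orthogonal_def by (simp add: inner_commute)
  qed
  moreover have "y \<in> span E" using assms unfolding onb_def by blast
  ultimately have "orthogonal y y"
    using orthogonal_to_span[of y E y] by blast
  then have "y = 0" unfolding orthogonal_def by simp
  then show ?thesis unfolding y_def by simp
qed

lemma onb_parseval:
  assumes "onb E" shows "x \<bullet> y = (\<Sum>e\<in>E. (e \<bullet> x) * (e \<bullet> y))"
proof -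
  have "x \<bullet> y = (\<Sum>e\<in>E. (e \<bullet> x) *\<^sub>R e) \<bullet> y" using onb_expand[OF assms, of x] by simp
  also have "\<dots> = (\<Sum>e\<in>E. (e \<bullet> x) * (e \<bullet> y))" by (simp add: inner_sum_left)
  finally show ?thesis .
qed

lemma onb_matrix_eq:
  assumes "onb E" "\<And>e. e \<in> E \<Longrightarrow> A *v e = B *v e"
  shows "A = B"
proof -
  have "A *v x = B *v x" for x
  proof -
    have "A *v x = A *v (\<Sum>e\<in>E. (e \<bullet> x) *\<^sub>R e)" using onb_expand[OF assms(1), of x] by simp
    also have "\<dots> = (\<Sum>e\<in>E. (e \<bullet> x) *\<^sub>R (A *v e))"
      by (simp add: linear_sum[OF matrix_vector_mul_linear] linear_scale[OF matrix_vector_mul_linear])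
    also have "\<dots> = (\<Sum>e\<in>E. (e \<bullet> x) *\<^sub>R (B *v e))" using assms(2) by simp
    also have "\<dots> = B *v (\<Sum>e\<in>E. (e \<bullet> x) *\<^sub>R e)"
      by (simp add: linear_sum[OF matrix_vector_mul_linear] linear_scale[OF matrix_vector_mul_linear])
    finally show ?thesis using onb_expand[OF assms(1), of x] by simp
  qed
  then show ?thesis by (simp add: matrix_eq)
qed

definition fc :: "(real^'d) set \<Rightarrow> (real^'d \<Rightarrow> real) \<Rightarrow> real^'d^'d" where
  "fc E c = (\<Sum>e\<in>E. c e *\<^sub>R outer e)"

lemma fc_cong: "E = F \<Longrightarrow> (\<And>e. e \<in> F \<Longrightarrow> a e = b e) \<Longrightarrow> fc E a = fc F b"
  unfolding fc_def by (auto intro: sum.cong)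

lemma fc_comp: "fc E c $ i $ j = (\<Sum>e\<in>E. c e * (e$i * e$j))"
  by (simp add: fc_def outer_def)

lemma fc_mult: "fc E c *v x = (\<Sum>e\<in>E. (c e * (e \<bullet> x)) *\<^sub>R e)"
  by (simp add: fc_comp matrix_vector_mult_def inner_vec_def vec_eq_iff sum_distrib_left
      sum_distrib_right algebra_simps sum.swap[of _ E])

lemma fc_eig: assumes "onb E" "f \<in> E" shows "fc E c *v f = c f *\<^sub>R f"
proof -
  have "fc E c *v f = (\<Sum>e\<in>E. if e = f then c f *\<^sub>R f else 0)"
    unfolding fc_mult using onb_inner[OF assms(1) _ assms(2)] by (intro sum.cong) auto
  also have "\<dots> = c f *\<^sub>R f" using onb_finite[OF assms(1)] assms(2) by simp
  finally show ?thesis .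
qed

lemma fc_sym: "sym_mat (fc E c)"
  by (simp add: sym_mat_def transpose_def vec_eq_iff fc_comp mult.commute)

definition eig :: "real^'d^'d \<Rightarrow> (real^'d) set \<Rightarrow> (real^'d \<Rightarrow> real) \<Rightarrow> bool" where
  "eig M E c \<longleftrightarrow> onb E \<and> (\<forall>e\<in>E. M *v e = c e *\<^sub>R e)"

lemma eig_fc: "eig M E c \<Longrightarrow> M = fc E c"
  unfolding eig_def by (auto intro: onb_matrix_eq simp: fc_eig)

lemma fc_eig_full: "onb E \<Longrightarrow> eig (fc E c) E c"
  by (simp add: eig_def fc_eig)

lemma sym_inner: "sym_mat M \<Longrightarrow> (M *v x) \<bullet> y = x \<bullet> (M *v y)"
  unfolding sym_mat_def by (metis dot_lmul_matrix vector_transpose_matrix)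

lemma eig_coincide:
  assumes "eig M E c" "eig M F d" "e \<in> E" "g \<in> F" "e \<bullet> g \<noteq> 0"
  shows "c e = d g"
proof -
  have "sym_mat M" using eig_fc[OF assms(1)] fc_sym by metis
  have "(M *v e) \<bullet> g = e \<bullet> (M *v g)" by (rule sym_inner[OF \<open>sym_mat M\<close>])
  then have "c e * (e \<bullet> g) = d g * (e \<bullet> g)"
    using assms unfolding eig_def by auto
  then show ?thesis using assms(5) by simp
qed

lemma fc_indep:
  assumes "eig M E c" "eig M F d"
  shows "fc E (\<lambda>e. f (c e)) = fc F (\<lambda>e. f (d e))"
proof (rule onb_matrix_eq)
  show "onb F" using assms(2) eig_def by blast
  fix g assume g: "g \<in> F"
  have "fc E (\<lambda>e. f (c e)) *v g = (\<Sum>e\<in>E. (f (c e) * (e \<bullet> g)) *\<^sub>R e)" by (rule fc_mult)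
  also have "\<dots> = (\<Sum>e\<in>E. (f (d g) * (e \<bullet> g)) *\<^sub>R e)"
    using eig_coincide[OF assms _ g] by (intro sum.cong) auto
  also have "\<dots> = f (d g) *\<^sub>R (\<Sum>e\<in>E. (e \<bullet> g) *\<^sub>R e)"
    by (simp add: scaleR_sum_right)
  also have "\<dots> = f (d g) *\<^sub>R g"
    using onb_expand[of E g] assms(1) unfolding eig_def by simp
  also have "\<dots> = fc F (\<lambda>e. f (d e)) *v g" using fc_eig[OF \<open>onb F\<close> g] by simp
  finally show "fc E (\<lambda>e. f (c e)) *v g = fc F (\<lambda>e. f (d e)) *v g" .
qed

lemma quad_zero:
  fixes a b :: real
  assumes "\<And>t. 2*t*a + t^2*b \<le> 0" shows "a = 0"
proof (rule ccontr)
  assume "a \<noteq> 0"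
  define k where "k = \<bar>b\<bar> + 1"
  have k: "k > 0" unfolding k_def by simp
  have "2*(a/k)*a + (a/k)^2*b \<le> 0" by (rule assms)
  then have "k^2 * (2*(a/k)*a + (a/k)^2*b) \<le> 0" using k
    by (simp add: mult_nonneg_nonpos)
  also have "k^2 * (2*(a/k)*a + (a/k)^2*b) = a^2 * (2*k + b)" using k
    by (simp add: field_simps power2_eq_square)
  finally have "a^2 * (2*k + b) \<le> 0" .
  moreover have "2*k + b > 0" unfolding k_def by (cases "b \<ge> 0") auto
  moreover have "a^2 > 0" using \<open>a \<noteq> 0\<close> by simp
  ultimately show False by (simp add: mult_le_0_iff)
qed

lemma spectral_sub:
  fixes M :: "real^'d^'d"
  assumes sym: "sym_mat M"
  shows "subspace S \<Longrightarrow> (\<forall>x\<in>S. M *v x \<in> S) \<Longrightarrow> \<exists>E c. E \<subseteq> S \<and> pairwise orthogonal E \<and>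
    (\<forall>e\<in>E. norm e = 1) \<and> span E = S \<and> (\<forall>e\<in>E. M *v e = c e *\<^sub>R e)"
proof (induct "dim S" arbitrary: S rule: less_induct)
  case less
  show ?case
  proof (cases "S = {0}")
    case True
    then show ?thesis by (intro exI[of _ "{}"]) auto
  next
    case False
    then obtain x0 where x0: "x0 \<in> S" "x0 \<noteq> 0" using less.prems(1) subspace_0 by blast
    define K where "K = S \<inter> sphere 0 1"
    have "compact K" unfolding K_def
      by (intro closed_Int_compact closed_subspace less.prems(1) compact_sphere)
    moreover have "x0 /\<^sub>R norm x0 \<in> K" unfolding K_def using x0 less.prems(1)
      by (simp add: subspace_scale)
    then have "K \<noteq> {}" by auto
    moreover have "continuous_on K (\<lambda>x. x \<bullet> (M *v x))"
      by (intro continuous_intros linear_continuous_on matrix_vector_mul_linear_gen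
          bounded_linear_inner_right) (simp add: linear_linear)
    ultimately obtain v where v: "v \<in> K" and vmax: "\<And>y. y \<in> K \<Longrightarrow> y \<bullet> (M *v y) \<le> v \<bullet> (M *v v)"
      using continuous_attains_sup by metis
    define lam where "lam = v \<bullet> (M *v v)"
    have vS: "v \<in> S" and vn: "norm v = 1" using v unfolding K_def by auto
    have vv: "v \<bullet> v = 1" using vn by (simp add: norm_eq_1)
    have bound: "y \<bullet> (M *v y) \<le> lam * (y \<bullet> y)" if "y \<in> S" for y
    proof (cases "y = 0")
      case True then show ?thesis by simp
    next
      case False
      have "y /\<^sub>R norm y \<in> K" unfolding K_def using that False less.prems(1)
        by (simp add: subspace_scale)
      then have "(y /\<^sub>R norm y) \<bullet> (M *v (y /\<^sub>R norm y)) \<le> lam" using vmax lam_def by blast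
      then have "(y \<bullet> (M *v y)) / (norm y)^2 \<le> lam"
        by (simp add: matrix_vector_mult_scaleR power2_eq_square divide_inverse mult_ac)
      then show ?thesis using False by (simp add: divide_le_eq power2_norm_eq_inner mult.commute)
    qed
    have perp: "v \<bullet> (M *v w) = 0" if "w \<in> S" "v \<bullet> w = 0" for w
    proof -
      have "2*t*(v \<bullet> (M *v w)) + t^2 * (w \<bullet> (M *v w) - lam * (w \<bullet> w)) \<le> 0" for t
      proof -
        have "v + t *\<^sub>R w \<in> S" using vS that(1) less.prems(1)
          by (simp add: subspace_add subspace_scale)
        from bound[OF this] have ineq: "(v + t *\<^sub>R w) \<bullet> (M *v (v + t *\<^sub>R w)) \<le> lam * ((v + t *\<^sub>R w) \<bullet> (v + t *\<^sub>R w))" .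
        moreover have "w \<bullet> (M *v v) = v \<bullet> (M *v w)"
          using sym_inner[OF sym, of w v] by (simp add: inner_commute)
        moreover have e1: "(v + t *\<^sub>R w) \<bullet> (M *v (v + t *\<^sub>R w)) = lam + 2*t*(v \<bullet> (M *v w)) + t^2*(w \<bullet> (M *v w))"
          using \<open>w \<bullet> (M *v v) = v \<bullet> (M *v w)\<close>
          by (simp add: matrix_vector_right_distrib matrix_vector_mult_scaleR inner_add_left inner_add_right lam_def power2_eq_square algebra_simps)
        moreover have e2: "(v + t *\<^sub>R w) \<bullet> (v + t *\<^sub>R w) = 1 + t^2 * (w \<bullet> w)"
          using that(2) vv by (simp add: inner_add_left inner_add_right inner_commute power2_eq_square)
        have "lam + 2*t*(v \<bullet> (M *v w)) + t^2*(w \<bullet> (M *v w)) \<le> lam * (1 + t^2 * (w \<bullet> w))"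
          using ineq unfolding e1 e2 .
        moreover have "t^2 * (w \<bullet> (M *v w) - lam * (w \<bullet> w)) = t^2*(w \<bullet> (M *v w)) - lam * (t^2 * (w \<bullet> w))"
          by (simp add: algebra_simps)
        ultimately show ?thesis by (simp add: distrib_left)
      qed
      then show ?thesis by (rule quad_zero)
    qed
    define u where "u = M *v v - lam *\<^sub>R v"
    have uS: "u \<in> S" unfolding u_def using vS less.prems by (simp add: subspace_diff subspace_scale)
    have vu: "v \<bullet> u = 0" unfolding u_def using vv by (simp add: inner_diff_right lam_def)
    have "(M *v v) \<bullet> u = 0" using perp[OF uS vu] sym_inner[OF sym] by simp
    then have "u \<bullet> u = 0" using vu unfolding u_def by (simp add: inner_diff_left)
    then have Mv: "M *v v = lam *\<^sub>R v" unfolding u_def by simp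
    define S' where "S' = S \<inter> {x. v \<bullet> x = 0}"
    have sub': "subspace S'" unfolding S'_def
      using less.prems(1) subspace_hyperplane[of v] by (auto simp: subspace_def)
    have inv': "\<forall>x\<in>S'. M *v x \<in> S'"
    proof
      fix x assume x: "x \<in> S'"
      have "v \<bullet> (M *v x) = (M *v v) \<bullet> x" using sym_inner[OF sym] by simp
      also have "\<dots> = 0" using x Mv unfolding S'_def by simp
      finally show "M *v x \<in> S'" using x less.prems(2) unfolding S'_def by auto
    qed
    have "v \<notin> S'" unfolding S'_def using vv by simp
    then have "S' \<subset> S" using vS unfolding S'_def by blast
    then have "dim S' < dim S"
      using dim_psubset[of S' S] sub' less.prems(1) by (metis span_eq_iff)
    from less.hyps[OF this sub' inv'] obtain E c where E: "E \<subseteq> S'" "pairwise orthogonal E"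
      "\<forall>e\<in>E. norm e = 1" "span E = S'" "\<forall>e\<in>E. M *v e = c e *\<^sub>R e" by blast
    have vE: "v \<notin> E" using E(1) vv unfolding S'_def by auto
    show ?thesis
    proof (intro exI[of _ "insert v E"] exI[of _ "c(v := lam)"] conjI)
      show "insert v E \<subseteq> S" using vS E(1) S'_def by auto
      show "pairwise orthogonal (insert v E)"
        using E(2) E(1) unfolding S'_def
        by (auto simp: pairwise_insert orthogonal_def inner_commute)
      show "\<forall>e\<in>insert v E. norm e = 1" using vn E(3) by auto
      show "\<forall>e\<in>insert v E. M *v e = (c(v := lam)) e *\<^sub>R e" using Mv E(5) vE by auto
      show "span (insert v E) = S"
      proof
        show "span (insert v E) \<subseteq> S"
          using vS E(1) S'_def less.prems(1) by (intro span_minimal) auto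
        show "S \<subseteq> span (insert v E)"
        proof
          fix x assume x: "x \<in> S"
          have "x - (v \<bullet> x) *\<^sub>R v \<in> S'" unfolding S'_def using x vS vv less.prems(1)
            by (simp add: subspace_diff subspace_scale inner_diff_right)
          then have "x - (v \<bullet> x) *\<^sub>R v \<in> span (insert v E)"
            using E(4) span_mono[of E "insert v E"] by auto
          moreover have "(v \<bullet> x) *\<^sub>R v \<in> span (insert v E)" by (simp add: span_base span_mul)
          ultimately have "(x - (v \<bullet> x) *\<^sub>R v) + (v \<bullet> x) *\<^sub>R v \<in> span (insert v E)"
            by (rule span_add)
          then show "x \<in> span (insert v E)" by simp
        qed
      qed
    qed
  qed
qed

lemma spectral:
  fixes M :: "real^'d^'d"
  assumes "sym_mat M" shows "\<exists>E c. eig M E c"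
  using spectral_sub[OF assms, of UNIV] unfolding eig_def onb_def by auto

lemma fc_mult_mat: assumes "onb E" shows "fc E a ** fc E b = fc E (\<lambda>e. a e * b e)"
proof (rule onb_matrix_eq[OF assms])
  fix e assume e: "e \<in> E"
  have "(fc E a ** fc E b) *v e = fc E a *v (fc E b *v e)" by (simp add: matrix_vector_mul_assoc)
  also have "\<dots> = (a e * b e) *\<^sub>R e" using fc_eig[OF assms e]
    by (simp add: matrix_vector_mult_scaleR)
  also have "\<dots> = fc E (\<lambda>e. a e * b e) *v e" using fc_eig[OF assms e] by simp
  finally show "(fc E a ** fc E b) *v e = fc E (\<lambda>e. a e * b e) *v e" .
qed

lemma mat1_fc: assumes "onb E" shows "mat 1 = fc E (\<lambda>_. 1)"
proof (rule onb_matrix_eq[OF assms])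
  fix e assume e: "e \<in> E"
  show "mat 1 *v e = fc E (\<lambda>_. 1) *v e" using fc_eig[OF assms e] by simp
qed

lemma mat_pow_fc: "onb E \<Longrightarrow> mat_pow (fc E a) k = fc E (\<lambda>e. a e ^ k)"
  by (induct k) (simp_all add: mat1_fc fc_mult_mat)

lemma fc_scale: "r *\<^sub>R fc E a = fc E (\<lambda>e. r * a e)"
  by (simp add: fc_def scaleR_sum_right)

lemma mat_exp_fc:
  assumes "onb E" shows "mat_exp (fc E a) = fc E (\<lambda>e. exp (a e))"
proof -
  have fin: "finite E" using onb_finite[OF assms] .
  have "(1 / fact k) *\<^sub>R mat_pow (fc E a) k = (\<Sum>e\<in>E. (a e ^ k /\<^sub>R fact k) *\<^sub>R outer e)" for k
  proof -
    have "(1 / fact k) *\<^sub>R mat_pow (fc E a) k = fc E (\<lambda>e. (1 / fact k) * a e ^ k)"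
      by (simp only: mat_pow_fc[OF assms] fc_scale)
    then show ?thesis unfolding fc_def by (simp add: divide_inverse mult.commute)
  qed
  moreover have "(\<lambda>k. \<Sum>e\<in>E. (a e ^ k /\<^sub>R fact k) *\<^sub>R outer e) sums (\<Sum>e\<in>E. exp (a e) *\<^sub>R outer e)"
    by (intro sums_sum sums_scaleR_left exp_converges)
  ultimately show ?thesis unfolding mat_exp_def fc_def by (simp add: sums_iff)
qed

lemma quad_fc: "onb E \<Longrightarrow> x \<bullet> (fc E a *v x) = (\<Sum>e\<in>E. a e * (e \<bullet> x)^2)"
  by (simp add: fc_mult inner_sum_right power2_eq_square inner_commute mult.assoc)

lemma onb_nonzero: assumes "onb E" "x \<noteq> 0" shows "\<exists>e\<in>E. e \<bullet> x \<noteq> 0"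
proof (rule ccontr)
  assume "\<not> ?thesis"
  then have "(\<Sum>e\<in>E. (e \<bullet> x) *\<^sub>R e) = 0" by simp
  then show False using onb_expand[OF assms(1), of x] assms(2) by simp
qed

lemma pos_def_fc:
  assumes "onb E" "\<And>e. e \<in> E \<Longrightarrow> a e > 0" shows "pos_def (fc E a)"
  unfolding pos_def_def
proof (intro conjI allI impI)
  show "sym_mat (fc E a)" by (rule fc_sym)
  fix x :: "real^'a" assume "x \<noteq> 0"
  then obtain e where e: "e \<in> E" "e \<bullet> x \<noteq> 0" using onb_nonzero[OF assms(1)] by blast
  have "0 < (\<Sum>e\<in>E. a e * (e \<bullet> x)^2)"
  proof (rule sum_pos2[of E e])
    show "finite E" using onb_finite[OF assms(1)] .
    show "e \<in> E" by fact
    show "0 < a e * (e \<bullet> x)^2" using e assms(2)[of e] by simp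
    fix i assume "i \<in> E" then show "0 \<le> a i * (i \<bullet> x)^2" using assms(2)[of i] by simp
  qed
  then show "0 < x \<bullet> (fc E a *v x)" using quad_fc[OF assms(1)] by simp
qed

lemma eig_quad: "eig M E c \<Longrightarrow> e \<in> E \<Longrightarrow> e \<bullet> (M *v e) = c e"
  unfolding eig_def using onb_inner[of E e e] by auto

lemma eig_pos: "eig M E c \<Longrightarrow> pos_def M \<Longrightarrow> e \<in> E \<Longrightarrow> c e > 0"
  using eig_quad[of M E c e] unfolding pos_def_def eig_def onb_def
  by (metis norm_zero zero_neq_one)

lemma eig_nonneg: "eig M E c \<Longrightarrow> pos_semidef M \<Longrightarrow> e \<in> E \<Longrightarrow> c e \<ge> 0"
  using eig_quad[of M E c e] unfolding pos_semidef_def by metis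

lemma pos_def_sym: "pos_def M \<Longrightarrow> sym_mat M"
  unfolding pos_def_def by blast

lemma mat_log_fc:
  assumes E: "eig P E p" and pos: "\<And>e. e \<in> E \<Longrightarrow> p e > 0"
  shows "mat_log P = fc E (\<lambda>e. ln (p e))"
  unfolding mat_log_def
proof (rule the_equality)
  have onb: "onb E" using E eig_def by blast
  show "sym_mat (fc E (\<lambda>e. ln (p e))) \<and> mat_exp (fc E (\<lambda>e. ln (p e))) = P"
    using pos by (simp add: fc_sym mat_exp_fc[OF onb] eig_fc[OF E] cong: fc_cong)
next
  fix L assume L: "sym_mat L \<and> mat_exp L = P"
  then obtain G m where G: "eig L G m" using spectral by blast
  have onbG: "onb G" using G eig_def by blast
  have "P = fc G (\<lambda>e. exp (m e))" using L eig_fc[OF G] mat_exp_fc[OF onbG] by simp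
  then have "eig P G (\<lambda>e. exp (m e))" using fc_eig_full[OF onbG] by simp
  from fc_indep[OF E this, of ln] show "L = fc E (\<lambda>e. ln (p e))"
    using eig_fc[OF G] by simp
qed

lemma mat_sqrt_fc:
  assumes E: "eig P E p" and pos: "\<And>e. e \<in> E \<Longrightarrow> p e > 0"
  shows "mat_sqrt P = fc E (\<lambda>e. sqrt (p e))"
  unfolding mat_sqrt_def
proof (rule the_equality)
  have onb: "onb E" using E eig_def by blast
  have "fc E (\<lambda>e. sqrt (p e)) ** fc E (\<lambda>e. sqrt (p e)) = fc E p"
    using pos by (simp add: fc_mult_mat[OF onb]) (intro fc_cong, auto simp: less_imp_le)
  then show "pos_def (fc E (\<lambda>e. sqrt (p e))) \<and> fc E (\<lambda>e. sqrt (p e)) ** fc E (\<lambda>e. sqrt (p e)) = P"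
    using pos by (simp add: pos_def_fc[OF onb] eig_fc[OF E, symmetric])
next
  fix S assume S: "pos_def S \<and> S ** S = P"
  then obtain G m where G: "eig S G m" using spectral pos_def_sym by blast
  have onbG: "onb G" using G eig_def by blast
  have mpos: "\<And>g. g \<in> G \<Longrightarrow> m g > 0" using eig_pos[OF G] S by blast
  have "P = fc G (\<lambda>e. m e * m e)" using S eig_fc[OF G] fc_mult_mat[OF onbG] by simp
  then have "eig P G (\<lambda>e. m e * m e)" using fc_eig_full[OF onbG] by simp
  from fc_indep[OF E this, of sqrt] have "fc E (\<lambda>e. sqrt (p e)) = fc G (\<lambda>e. sqrt (m e * m e))" .
  also have "\<dots> = fc G m" using mpos by (intro fc_cong) (auto simp: less_imp_le)
  finally show "S = fc E (\<lambda>e. sqrt (p e))" using eig_fc[OF G] by simp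
qed

lemma matrix_inv_eq:
  fixes A B :: "real^'d^'d"
  assumes "A ** B = mat 1" "B ** A = mat 1" shows "matrix_inv A = B"
proof -
  have ex: "\<exists>A'. A ** A' = mat 1 \<and> A' ** A = mat 1" using assms by blast
  define C where "C = matrix_inv A"
  have C: "A ** C = mat 1 \<and> C ** A = mat 1"
    unfolding C_def matrix_inv_def using someI_ex[OF ex] .
  have "C = C ** (A ** B)" using assms by (simp add: matrix_mul_rid)
  also have "\<dots> = (C ** A) ** B" by (simp add: matrix_mul_assoc)
  also have "\<dots> = B" using C by (simp add: matrix_mul_lid)
  finally show ?thesis unfolding C_def .
qed

lemma inv_fc:
  assumes "onb E" "\<And>e. e \<in> E \<Longrightarrow> a e \<noteq> 0"
  shows "matrix_inv (fc E a) = fc E (\<lambda>e. 1 / a e)"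
proof -
  have "fc E a ** fc E (\<lambda>e. 1 / a e) = mat 1" "fc E (\<lambda>e. 1 / a e) ** fc E a = mat 1"
    using assms by (simp_all add: fc_mult_mat mat1_fc[OF assms(1)] cong: fc_cong)
  then show ?thesis by (rule matrix_inv_eq)
qed

lemma onb_coef: assumes "onb E" "f \<in> E" shows "f \<bullet> (\<Sum>e\<in>E. c e *\<^sub>R e) = c f"
proof -
  have "f \<bullet> (\<Sum>e\<in>E. c e *\<^sub>R e) = (\<Sum>e\<in>E. c e * (f \<bullet> e))"
    by (simp only: inner_sum_right inner_scaleR_right)
  also have "\<dots> = (\<Sum>e\<in>E. if e = f then c f else 0)"
  proof (rule sum.cong[OF refl])
    fix e assume "e \<in> E"
    then have "f \<bullet> e = (if f = e then 1 else 0)" using onb_inner[OF assms(1,2)] by blast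
    then show "c e * (f \<bullet> e) = (if e = f then c f else 0)" by auto
  qed
  also have "\<dots> = c f" using onb_finite[OF assms(1)] assms(2) by (simp add: sum.delta)
  finally show ?thesis .
qed

lemma onb_sqnorm: assumes "onb E" shows "(\<Sum>e\<in>E. c e *\<^sub>R e) \<bullet> (\<Sum>e\<in>E. c e *\<^sub>R e) = (\<Sum>e\<in>E. (c e)^2)"
proof -
  have "(\<Sum>e\<in>E. c e *\<^sub>R e) \<bullet> (\<Sum>e\<in>E. c e *\<^sub>R e) =
     (\<Sum>f\<in>E. (f \<bullet> (\<Sum>e\<in>E. c e *\<^sub>R e)) * (f \<bullet> (\<Sum>e\<in>E. c e *\<^sub>R e)))"
    by (rule onb_parseval[OF assms])
  also have "\<dots> = (\<Sum>f\<in>E. (c f)^2)"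
    by (rule sum.cong[OF refl]) (simp add: onb_coef[OF assms] power2_eq_square)
  finally show ?thesis .
qed

lemma norm_fc:
  assumes "onb E" shows "(norm (fc E a))^2 = (\<Sum>e\<in>E. (a e)^2)"
proof -
  have row: "fc E a $ i = (\<Sum>e\<in>E. (a e * e$i) *\<^sub>R e)" for i
    by (simp add: vec_eq_iff fc_comp mult.assoc)
  have "(norm (fc E a))^2 = (\<Sum>i\<in>UNIV. fc E a $ i \<bullet> fc E a $ i)"
    by (simp add: power2_norm_eq_inner inner_vec_def)
  also have "\<dots> = (\<Sum>i\<in>UNIV. \<Sum>e\<in>E. (a e)^2 * (e$i)^2)"
    by (simp add: row onb_sqnorm[OF assms] power_mult_distrib)
  also have "\<dots> = (\<Sum>e\<in>E. (a e)^2 * (\<Sum>i\<in>UNIV. (e$i)^2))"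
    by (simp add: sum.swap[of _ UNIV] sum_distrib_left)
  also have "\<dots> = (\<Sum>e\<in>E. (a e)^2)"
  proof (rule sum.cong[OF refl])
    fix e assume "e \<in> E"
    then have "e \<bullet> e = 1" using onb_inner[OF assms] by simp
    then show "(a e)^2 * (\<Sum>i\<in>UNIV. (e$i)^2) = (a e)^2"
      by (simp add: inner_vec_def power2_eq_square)
  qed
  finally show ?thesis .
qed

lemma onb_image:
  fixes g :: "real^'a \<Rightarrow> real^'a"
  assumes F: "onb F" and g: "\<And>v v'. v \<in> F \<Longrightarrow> v' \<in> F \<Longrightarrow> g v \<bullet> g v' = (if v = v' then 1 else 0)"
  shows "onb (g ` F)" "inj_on g F"
proof -
  show inj: "inj_on g F"
  proof (rule inj_onI)
    fix v v' assume "v \<in> F" "v' \<in> F" "g v = g v'"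
    then have "g v \<bullet> g v' = 1" using g[of v v] by simp
    then show "v = v'" using g[OF \<open>v \<in> F\<close> \<open>v' \<in> F\<close>] by (auto split: if_splits)
  qed
  have po: "pairwise orthogonal (g ` F)"
    unfolding pairwise_def orthogonal_def using g by auto
  have n1: "\<forall>e\<in>g ` F. norm e = 1" using g by (auto simp: norm_eq_1)
  have ind: "independent (g ` F)"
    using po n1 by (intro pairwise_orthogonal_independent) auto
  have indF: "independent F" using F unfolding onb_def
    by (intro pairwise_orthogonal_independent) auto
  have "dim (UNIV :: (real^'a) set) = card F"
    using F dim_eq_card_independent[OF indF] dim_span[of F] unfolding onb_def by simp
  also have "\<dots> = card (g ` F)" using card_image[OF inj] by simp
  finally have "UNIV \<subseteq> span (g ` F)"
    using card_ge_dim_independent[of "g ` F" UNIV] ind by simp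
  then show "onb (g ` F)" using po n1 unfolding onb_def by auto
qed

lemma sym3: assumes "sym_mat R" "sym_mat X" shows "sym_mat (R ** X ** R)"
  using assms unfolding sym_mat_def by (simp add: matrix_transpose_mul matrix_mul_assoc)

lemma delta_eq:
  fixes X A :: "real^'d^'d"
  assumes X: "pos_def X" and A: "pos_def A"
    and U: "eig (matrix_inv (mat_sqrt X) ** A ** matrix_inv (mat_sqrt X)) U c"
  shows "(delta_R A X)^2 = (\<Sum>u\<in>U. (ln (c u))^2)"
proof -
  obtain EXX xe where EXX: "eig X EXX xe" using spectral pos_def_sym[OF X] by blast
  have onbX: "onb EXX" using EXX eig_def by blast
  have xpos: "\<And>e. e \<in> EXX \<Longrightarrow> xe e > 0" using eig_pos[OF EXX X] by blast
  define Q where "Q = mat_sqrt X"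
  define Qi where "Qi = matrix_inv Q"
  have Qfc: "Q = fc EXX (\<lambda>e. sqrt (xe e))" unfolding Q_def by (rule mat_sqrt_fc[OF EXX xpos])
  have Qifc: "Qi = fc EXX (\<lambda>e. 1 / sqrt (xe e))" unfolding Qi_def Qfc
    by (intro inv_fc[OF onbX]) (use xpos in force)
  have QQ: "Q ** Q = X" unfolding Qfc fc_mult_mat[OF onbX] eig_fc[OF EXX]
    using xpos by (intro fc_cong) (auto simp: less_imp_le)
  have QQi: "Q ** Qi = mat 1" unfolding Qfc Qifc fc_mult_mat[OF onbX] mat1_fc[OF onbX]
    by (intro fc_cong) (simp_all add: xpos less_imp_neq[THEN not_sym])
  have QiQ: "Qi ** Q = mat 1" unfolding Qfc Qifc fc_mult_mat[OF onbX] mat1_fc[OF onbX]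
    by (intro fc_cong) (simp_all add: xpos less_imp_neq[THEN not_sym])
  have symQ: "sym_mat Q" unfolding Qfc by (rule fc_sym)
  have QQv: "Q *v (Q *v w) = X *v w" for w by (simp only: matrix_vector_mul_assoc QQ)
  obtain EA a where EA: "eig A EA a" using spectral pos_def_sym[OF A] by blast
  have onbA: "onb EA" using EA eig_def by blast
  have apos: "\<And>e. e \<in> EA \<Longrightarrow> a e > 0" using eig_pos[OF EA A] by blast
  define SA where "SA = mat_sqrt A"
  define R where "R = matrix_inv SA"
  have SAfc: "SA = fc EA (\<lambda>e. sqrt (a e))" unfolding SA_def by (rule mat_sqrt_fc[OF EA apos])
  have Rfc: "R = fc EA (\<lambda>e. 1 / sqrt (a e))" unfolding R_def SAfc
    by (intro inv_fc[OF onbA]) (use apos in force)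
  have SASA: "SA ** SA = A" unfolding SAfc fc_mult_mat[OF onbA] eig_fc[OF EA]
    using apos by (intro fc_cong) (auto simp: less_imp_le)
  have SAR: "SA ** R = mat 1" unfolding SAfc Rfc fc_mult_mat[OF onbA] mat1_fc[OF onbA]
    by (intro fc_cong) (simp_all add: apos less_imp_neq[THEN not_sym])
  have symR: "sym_mat R" unfolding Rfc by (rule fc_sym)
  have SASAv: "SA *v (SA *v w) = A *v w" for w by (simp only: matrix_vector_mul_assoc SASA)
  define P where "P = R ** X ** R"
  have symP: "sym_mat P" unfolding P_def by (rule sym3[OF symR pos_def_sym[OF X]])
  have Pv: "P *v x = R *v (X *v (R *v x))" for x
    unfolding P_def by (simp add: matrix_vector_mul_assoc matrix_mul_assoc)
  have SARv: "SA *v (R *v x) = x" for x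
    by (simp add: matrix_vector_mul_assoc SAR)
  have QiQv: "Qi *v (Q *v x) = x" for x
    by (simp add: matrix_vector_mul_assoc QiQ)
  have posP: "pos_def P" unfolding pos_def_def
  proof (intro conjI allI impI)
    show "sym_mat P" by (rule symP)
    fix x :: "real^'d" assume "x \<noteq> 0"
    then have "R *v x \<noteq> 0" using SARv[of x] by auto
    then have "0 < (R *v x) \<bullet> (X *v (R *v x))" using X unfolding pos_def_def by blast
    also have "\<dots> = x \<bullet> (P *v x)" unfolding Pv using sym_inner[OF symR] by simp
    finally show "0 < x \<bullet> (P *v x)" .
  qed
  obtain F p where F: "eig P F p" using spectral[OF symP] by blast
  have onbF: "onb F" using F eig_def by blast
  have ppos: "\<And>e. e \<in> F \<Longrightarrow> p e > 0" using eig_pos[OF F posP] by blast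
  have "delta_R A X = norm (mat_log P)"
    unfolding delta_R_def P_def R_def SA_def ..
  also have "mat_log P = fc F (\<lambda>e. ln (p e))" by (rule mat_log_fc[OF F ppos])
  finally have d1: "(delta_R A X)^2 = (\<Sum>e\<in>F. (ln (p e))^2)" using norm_fc[OF onbF] by simp
  define C where "C = Qi ** A ** Qi"
  have Cv: "C *v x = Qi *v (A *v (Qi *v x))" for x
    unfolding C_def by (simp add: matrix_vector_mul_assoc matrix_mul_assoc)
  define g where "g v = (1 / sqrt (p v)) *\<^sub>R (Q *v (R *v v))" for v
  have Cg0: "C *v (Q *v (R *v v)) = (1 / p v) *\<^sub>R (Q *v (R *v v))" if v: "v \<in> F" for v
  proof -
    have "P *v v = p v *\<^sub>R v" using F v unfolding eig_def by blast
    then have "R *v (X *v (R *v v)) = p v *\<^sub>R v" using Pv by simp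
    then have "SA *v (R *v (X *v (R *v v))) = SA *v (p v *\<^sub>R v)" by simp
    then have XRv: "X *v (R *v v) = p v *\<^sub>R (SA *v v)" using SARv by (simp add: matrix_vector_mult_scaleR)
    have "Q *v (R *v v) = Qi *v (Q *v (Q *v (R *v v)))" using QiQv by simp
    also have "\<dots> = Qi *v (X *v (R *v v))" by (simp only: QQv)
    also have "\<dots> = p v *\<^sub>R (Qi *v (SA *v v))" using XRv by (simp add: matrix_vector_mult_scaleR)
    finally have QRv: "Q *v (R *v v) = p v *\<^sub>R (Qi *v (SA *v v))" .
    have "C *v (Q *v (R *v v)) = Qi *v (A *v (R *v v))" using Cv QiQv by simp
    also have "\<dots> = Qi *v (SA *v v)"
      using SARv SASAv[of "R *v v", symmetric] by simp
    also have "\<dots> = (1 / p v) *\<^sub>R (Q *v (R *v v))" using QRv ppos[OF v] by simp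
    finally show ?thesis .
  qed
  have Cg: "C *v g v = (1 / p v) *\<^sub>R g v" if "v \<in> F" for v
    unfolding g_def using Cg0[OF that] by (simp add: matrix_vector_mult_scaleR)
  have QRinner: "(Q *v (R *v v)) \<bullet> (Q *v (R *v v')) = p v' * (v \<bullet> v')" if "v' \<in> F" for v v'
  proof -
    have "(Q *v (R *v v)) \<bullet> (Q *v (R *v v')) = (R *v v) \<bullet> (Q *v (Q *v (R *v v')))"
      using sym_inner[OF symQ] by simp
    also have "\<dots> = (R *v v) \<bullet> (X *v (R *v v'))" by (simp only: QQv)
    also have "\<dots> = v \<bullet> (P *v v')" unfolding Pv using sym_inner[OF symR] by simp
    also have "\<dots> = p v' * (v \<bullet> v')" using F that unfolding eig_def by simp
    finally show ?thesis .
  qed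
  have ginner: "g v \<bullet> g v' = (if v = v' then 1 else 0)" if "v \<in> F" "v' \<in> F" for v v'
  proof -
    have "g v \<bullet> g v' = (1 / sqrt (p v)) * (1 / sqrt (p v')) * (p v' * (v \<bullet> v'))"
      unfolding g_def using QRinner[OF that(2)] by simp
    also have "\<dots> = (if v = v' then 1 else 0)"
      using onb_inner[OF onbF that] ppos[OF that(1)] ppos[OF that(2)]
      by (auto simp: real_sqrt_mult[symmetric])
    finally show ?thesis .
  qed
  define W where "W = g ` F"
  have onbW: "onb W" and injg: "inj_on g F" unfolding W_def using onb_image[OF onbF ginner] by auto
  define cw where "cw w = w \<bullet> (C *v w)" for w
  have cwg: "cw (g v) = 1 / p v" if "v \<in> F" for v
    unfolding cw_def Cg[OF that] using ginner[OF that that] by simp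
  have eigW: "eig C W cw" unfolding eig_def
  proof (intro conjI ballI)
    show "onb W" by (rule onbW)
    fix w assume "w \<in> W"
    then obtain v where v: "v \<in> F" "w = g v" unfolding W_def by blast
    show "C *v w = cw w *\<^sub>R w" unfolding v(2) cwg[OF v(1)] Cg[OF v(1)] ..
  qed
  have "(\<Sum>w\<in>W. (ln (cw w))^2) = (\<Sum>v\<in>F. (ln (cw (g v)))^2)"
    unfolding W_def by (rule sum.reindex[OF injg, unfolded comp_def])
  also have "\<dots> = (\<Sum>v\<in>F. (ln (p v))^2)"
  proof (rule sum.cong[OF refl])
    fix v assume v: "v \<in> F"
    have "ln (1 / p v) = - ln (p v)" using ppos[OF v] by (simp add: ln_div)
    then show "(ln (cw (g v)))^2 = (ln (p v))^2" using cwg[OF v] by simp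
  qed
  finally have d2: "(\<Sum>w\<in>W. (ln (cw w))^2) = (delta_R A X)^2" using d1 by simp
  have onbU: "onb U" using U eig_def by blast
  have UC: "eig C U c" using U unfolding C_def Qi_def Q_def .
  have "(\<Sum>u\<in>U. (ln (c u))^2) = (norm (fc U (\<lambda>u. ln (c u))))^2" using norm_fc[OF onbU] by simp
  also have "fc U (\<lambda>u. ln (c u)) = fc W (\<lambda>u. ln (cw u))" by (rule fc_indep[OF UC eigW])
  also have "(norm \<dots>)^2 = (\<Sum>w\<in>W. (ln (cw w))^2)" by (rule norm_fc[OF onbW])
  finally show ?thesis using d2 by simp
qed

lemma h_convex: "convex_on {0<..1} (\<lambda>t::real. (ln t)^2)"
proof (rule convex_on_realI[where f' = "\<lambda>t. 2 * ln t / t"])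
  show "connected {0<..(1::real)}" by simp
  fix x :: real assume "x \<in> {0<..1}"
  then have x: "x > 0" by simp
  show "((\<lambda>t. (ln t)^2) has_real_derivative 2 * ln x / x) (at x)"
    using x by (auto intro!: derivative_eq_intros simp: field_simps power2_eq_square)
next
  fix x y :: real assume xy: "x \<in> {0<..1}" "y \<in> {0<..1}" "x \<le> y"
  then have "ln x \<le> ln y" "ln y \<le> 0" by auto
  have "ln x / x \<le> ln y / x" using \<open>ln x \<le> ln y\<close> xy by (simp add: divide_right_mono)
  also have "\<dots> \<le> ln y / y" using \<open>ln y \<le> 0\<close> xy
    by (intro divide_left_mono_neg) auto
  finally show "2 * ln x / x \<le> 2 * ln y / y" by simp
qed

lemma onb_nonempty: "onb (E :: (real^'d) set) \<Longrightarrow> E \<noteq> {}"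
proof
  assume "onb E" "E = {}"
  then have "span {} = (UNIV :: (real^'d) set)" unfolding onb_def by simp
  then have "(vec 1 :: real^'d) \<in> span {}" by simp
  then show False by (simp add: vec_eq_iff)
qed

lemma jensen_tr:
  assumes h: "convex_on {0<..1} h" and E: "eig C E c" and cdom: "\<And>e. e \<in> E \<Longrightarrow> c e \<in> {0<..1}"
    and U: "onb U"
  shows "(\<Sum>u\<in>U. h (u \<bullet> (C *v u))) \<le> (\<Sum>e\<in>E. h (c e))"
proof -
  have onbE: "onb E" using E eig_def by blast
  have finE: "finite E" by (rule onb_finite[OF onbE])
  have finU: "finite U" by (rule onb_finite[OF U])
  have "h (u \<bullet> (C *v u)) \<le> (\<Sum>e\<in>E. (e \<bullet> u)^2 * h (c e))" if u: "u \<in> U" for u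
  proof -
    have "u \<bullet> (C *v u) = (\<Sum>e\<in>E. (e \<bullet> u)^2 *\<^sub>R c e)"
      unfolding eig_fc[OF E] quad_fc[OF onbE] by (simp add: mult.commute)
    moreover have "(\<Sum>e\<in>E. (e \<bullet> u)^2) = 1"
      using onb_parseval[OF onbE, of u u] onb_inner[OF U u u] by (simp add: power2_eq_square)
    ultimately show ?thesis
      using convex_on_sum[OF finE onb_nonempty[OF onbE] h, of "\<lambda>e. (e \<bullet> u)^2" c] cdom by simp
  qed
  then have "(\<Sum>u\<in>U. h (u \<bullet> (C *v u))) \<le> (\<Sum>u\<in>U. \<Sum>e\<in>E. (e \<bullet> u)^2 * h (c e))"
    by (rule sum_mono)
  also have "\<dots> = (\<Sum>e\<in>E. h (c e) * (\<Sum>u\<in>U. (u \<bullet> e)^2))"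
    by (simp add: sum.swap[of _ U] sum_distrib_left inner_commute mult.commute)
  also have "\<dots> = (\<Sum>e\<in>E. h (c e))"
  proof (rule sum.cong[OF refl])
    fix e assume e: "e \<in> E"
    have "(\<Sum>u\<in>U. (u \<bullet> e)^2) = 1"
      using onb_parseval[OF U, of e e] onb_inner[OF onbE e e] by (simp add: power2_eq_square)
    then show "h (c e) * (\<Sum>u\<in>U. (u \<bullet> e)^2) = h (c e)" by simp
  qed
  finally show ?thesis .
qed

lemma sym_iff: "sym_mat M \<longleftrightarrow> (\<forall>i j. M$i$j = M$j$i)"
  by (auto simp: sym_mat_def transpose_def vec_eq_iff)

lemma sum_mat_vec: "finite I \<Longrightarrow> (sum M I) *v z = (\<Sum>i\<in>I. M i *v z)"
  by (induct I rule: finite_induct) (simp_all add: matrix_vector_mult_add_rdistrib)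

lemma quad_lin:
  fixes B :: "'n::finite \<Rightarrow> real^'d^'d"
  shows "x \<bullet> ((\<Sum>i\<in>UNIV. g$i *\<^sub>R B i) *v y) = (\<Sum>i\<in>UNIV. g$i * (x \<bullet> (B i *v y)))"
  by (simp add: sum_mat_vec scaleR_matrix_vector_assoc[symmetric] inner_sum_right)

lemma sqrt_facts:
  assumes X: "pos_def X"
  shows "sym_mat (matrix_inv (mat_sqrt X))"
    "\<And>u. matrix_inv (mat_sqrt X) *v (X *v (matrix_inv (mat_sqrt X) *v u)) = u"
    "\<And>u. mat_sqrt X *v (matrix_inv (mat_sqrt X) *v u) = u"
proof -
  obtain EXX xe where EXX: "eig X EXX xe" using spectral pos_def_sym[OF X] by blast
  have onbX: "onb EXX" using EXX eig_def by blast
  have xpos: "\<And>e. e \<in> EXX \<Longrightarrow> xe e > 0" using eig_pos[OF EXX X] by blast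
  define Q where "Q = mat_sqrt X"
  define Qi where "Qi = matrix_inv Q"
  have Qfc: "Q = fc EXX (\<lambda>e. sqrt (xe e))" unfolding Q_def by (rule mat_sqrt_fc[OF EXX xpos])
  have Qifc: "Qi = fc EXX (\<lambda>e. 1 / sqrt (xe e))" unfolding Qi_def Qfc
    by (intro inv_fc[OF onbX]) (use xpos in force)
  show "sym_mat (matrix_inv (mat_sqrt X))" unfolding Qi_def[symmetric] Q_def[symmetric] Qifc by (rule fc_sym)
  have "Qi ** X ** Qi = mat 1"
    unfolding Qifc mat1_fc[OF onbX] eig_fc[OF EXX] fc_mult_mat[OF onbX]
    by (intro fc_cong) (simp_all add: xpos less_imp_neq[THEN not_sym] less_imp_le)
  then show "\<And>u. matrix_inv (mat_sqrt X) *v (X *v (matrix_inv (mat_sqrt X) *v u)) = u"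
    unfolding Qi_def[symmetric] Q_def[symmetric]
    by (metis matrix_vector_mul_assoc matrix_vector_mul_lid)
  have "Q ** Qi = mat 1"
    unfolding Qifc Qfc mat1_fc[OF onbX] fc_mult_mat[OF onbX]
    by (intro fc_cong) (simp_all add: xpos less_imp_neq[THEN not_sym])
  then show "\<And>u. mat_sqrt X *v (matrix_inv (mat_sqrt X) *v u) = u"
    unfolding Qi_def[symmetric] Q_def[symmetric]
    by (metis matrix_vector_mul_assoc matrix_vector_mul_lid)
qed

theorem theorem1:
  fixes X :: "real^'d^'d" and B :: "'n::finite \<Rightarrow> real^'d^'d"
  assumes "pos_def X"
    and "\<And>i. pos_def (B i)"
  shows "convex_on
           ({\<alpha> :: real^'n. loewner_le (\<Sum>i\<in>UNIV. \<alpha> $ i *\<^sub>R B i) X \<and> (\<forall>i. \<alpha> $ i \<ge> 0)}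
             \<inter> {\<alpha>. pos_def (\<Sum>i\<in>UNIV. \<alpha> $ i *\<^sub>R B i)})
           (\<lambda>\<alpha>. (delta_R (\<Sum>i\<in>UNIV. \<alpha> $ i *\<^sub>R B i) X)\<^sup>2)"
proof -
  define A where "A g = (\<Sum>i\<in>UNIV. g $ i *\<^sub>R B i)" for g :: "real^'n"
  define S where "S = {\<alpha>. loewner_le (A \<alpha>) X \<and> (\<forall>i. \<alpha> $ i \<ge> 0)} \<inter> {\<alpha>. pos_def (A \<alpha>)}"
  define Qi where "Qi = matrix_inv (mat_sqrt X)"
  have symQi: "sym_mat Qi" and QiXQi: "\<And>u. Qi *v (X *v (Qi *v u)) = u"
    and QQi: "\<And>u. mat_sqrt X *v (Qi *v u) = u"
    using sqrt_facts[OF assms(1)] unfolding Qi_def by auto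
  define Cm where "Cm g = Qi ** A g ** Qi" for g
  define h where "h t = (ln t)^2" for t :: real
  have hconv: "convex_on {0<..1} h" unfolding h_def by (rule h_convex)
  have symB: "\<And>i. sym_mat (B i)" using assms(2) pos_def_sym by blast
  have symA: "sym_mat (A g)" for g
    using symB unfolding sym_iff A_def by (simp add: sym_iff)
  have quadA: "x \<bullet> (A g *v y) = (\<Sum>i\<in>UNIV. g$i * (x \<bullet> (B i *v y)))" for x y g
    unfolding A_def by (rule quad_lin)
  have quadLin: "x \<bullet> (A (s *\<^sub>R a + t *\<^sub>R b) *v x) = s * (x \<bullet> (A a *v x)) + t * (x \<bullet> (A b *v x))" for x s t a b
    unfolding quadA by (simp add: algebra_simps sum.distrib sum_distrib_left)
  have Cquad: "u \<bullet> (Cm g *v u) = (Qi *v u) \<bullet> (A g *v (Qi *v u))" for u g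
  proof -
    have "Cm g *v u = Qi *v (A g *v (Qi *v u))"
      unfolding Cm_def by (simp add: matrix_vector_mul_assoc matrix_mul_assoc)
    then show ?thesis using sym_inner[OF symQi] by simp
  qed
  have symC: "sym_mat (Cm g)" for g unfolding Cm_def by (rule sym3[OF symQi symA])
  have dom: "u \<bullet> (Cm g *v u) \<in> {0<..1}" if g: "g \<in> S" and u: "norm u = 1" for g u
  proof -
    have pd: "pos_def (A g)" and le: "pos_semidef (X - A g)"
      using g unfolding S_def loewner_le_def by auto
    have "Qi *v u \<noteq> 0" using QQi[of u] u by auto
    then have "0 < (Qi *v u) \<bullet> (A g *v (Qi *v u))" using pd unfolding pos_def_def by blast
    moreover have "0 \<le> (Qi *v u) \<bullet> ((X - A g) *v (Qi *v u))" using le unfolding pos_semidef_def by blast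
    moreover have "(Qi *v u) \<bullet> (X *v (Qi *v u)) = 1"
      using sym_inner[OF symQi, of u "X *v (Qi *v u)"] QiXQi[of u] u by (simp add: norm_eq_1)
    ultimately show ?thesis unfolding Cquad
      by (simp add: matrix_vector_mult_diff_rdistrib inner_diff_right)
  qed
  have phi: "(delta_R (A g) X)^2 = (\<Sum>u\<in>U. h (c u))" if g: "g \<in> S" and U: "eig (Cm g) U c" for g U c
    unfolding h_def
    by (rule delta_eq[OF assms(1)]) (use g U in \<open>auto simp: S_def Cm_def Qi_def\<close>)
  have eigdom: "c e \<in> {0<..1}" if g: "g \<in> S" and E: "eig (Cm g) E c" and e: "e \<in> E" for g E c e
  proof -
    have "norm e = 1" using E e unfolding eig_def onb_def by blast
    then show ?thesis using dom[OF g] eig_quad[OF E e] by metis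
  qed
  have Ssub: "s *\<^sub>R a + t *\<^sub>R b \<in> S"
    if a: "a \<in> S" and b: "b \<in> S" and st: "s \<ge> 0" "t \<ge> 0" "s + t = 1" for a b s t
  proof -
    have pa: "pos_def (A a)" "pos_semidef (X - A a)" "\<forall>i. a$i \<ge> 0"
      and pb: "pos_def (A b)" "pos_semidef (X - A b)" "\<forall>i. b$i \<ge> 0"
      using a b unfolding S_def loewner_le_def by auto
    have "pos_def (A (s *\<^sub>R a + t *\<^sub>R b))" unfolding pos_def_def
    proof (intro conjI allI impI)
      show "sym_mat (A (s *\<^sub>R a + t *\<^sub>R b))" by (rule symA)
      fix x :: "real^'d" assume "x \<noteq> 0"
      then have "0 < x \<bullet> (A a *v x)" "0 < x \<bullet> (A b *v x)" using pa pb unfolding pos_def_def by auto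
      then show "0 < x \<bullet> (A (s *\<^sub>R a + t *\<^sub>R b) *v x)" unfolding quadLin using st
        by (cases "s = 0") (auto intro: add_pos_nonneg)
    qed
    moreover have "pos_semidef (X - A (s *\<^sub>R a + t *\<^sub>R b))" unfolding pos_semidef_def
    proof (intro conjI allI)
      show "sym_mat (X - A (s *\<^sub>R a + t *\<^sub>R b))"
        using symA[of "s *\<^sub>R a + t *\<^sub>R b"] pos_def_sym[OF assms(1)] unfolding sym_iff by simp
      fix x :: "real^'d"
      have "0 \<le> x \<bullet> ((X - A a) *v x)" "0 \<le> x \<bullet> ((X - A b) *v x)"
        using pa pb unfolding pos_semidef_def by auto
      then have "0 \<le> s * (x \<bullet> ((X - A a) *v x)) + t * (x \<bullet> ((X - A b) *v x))"
        using st by simp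
      also have "\<dots> = x \<bullet> ((X - A (s *\<^sub>R a + t *\<^sub>R b)) *v x)"
        unfolding matrix_vector_mult_diff_rdistrib inner_diff_right quadLin using st
        by (simp add: algebra_simps) (simp add: distrib_right[symmetric])
      finally show "0 \<le> x \<bullet> ((X - A (s *\<^sub>R a + t *\<^sub>R b)) *v x)" .
    qed
    moreover have "\<forall>i. (s *\<^sub>R a + t *\<^sub>R b)$i \<ge> 0" using pa(3) pb(3) st by simp
    ultimately show ?thesis unfolding S_def loewner_le_def by simp
  qed
  have "convex_on S (\<lambda>g. (delta_R (A g) X)^2)"
    unfolding convex_on_def
  proof (intro conjI ballI allI impI)
    show "convex S" unfolding convex_def using Ssub by blast
    fix a b and s t :: real
    assume a: "a \<in> S" and b: "b \<in> S" and st: "0 \<le> s" "0 \<le> t" "s + t = 1"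
    define g where "g = s *\<^sub>R a + t *\<^sub>R b"
    have gS: "g \<in> S" unfolding g_def using Ssub[OF a b st] .
    obtain U nu where U: "eig (Cm g) U nu" using spectral[OF symC] by blast
    obtain E1 c1 where E1: "eig (Cm a) E1 c1" using spectral[OF symC] by blast
    obtain E2 c2 where E2: "eig (Cm b) E2 c2" using spectral[OF symC] by blast
    have onbU: "onb U" using U eig_def by blast
    have "(delta_R (A g) X)^2 = (\<Sum>u\<in>U. h (nu u))" by (rule phi[OF gS U])
    also have "\<dots> \<le> (\<Sum>u\<in>U. s * h (u \<bullet> (Cm a *v u)) + t * h (u \<bullet> (Cm b *v u)))"
    proof (rule sum_mono)
      fix u assume u: "u \<in> U"
      have nu1: "norm u = 1" using onbU u unfolding onb_def by blast
      have "nu u = u \<bullet> (Cm g *v u)" using eig_quad[OF U u] by simp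
      also have "\<dots> = s * (u \<bullet> (Cm a *v u)) + t * (u \<bullet> (Cm b *v u))"
        unfolding Cquad g_def quadLin ..
      finally have "nu u = s * (u \<bullet> (Cm a *v u)) + t * (u \<bullet> (Cm b *v u))" .
      then show "h (nu u) \<le> s * h (u \<bullet> (Cm a *v u)) + t * h (u \<bullet> (Cm b *v u))"
        using hconv dom[OF a nu1] dom[OF b nu1] st unfolding convex_on_def by simp
    qed
    also have "\<dots> = s * (\<Sum>u\<in>U. h (u \<bullet> (Cm a *v u))) + t * (\<Sum>u\<in>U. h (u \<bullet> (Cm b *v u)))"
      by (simp add: sum.distrib sum_distrib_left)
    also have "\<dots> \<le> s * (\<Sum>e\<in>E1. h (c1 e)) + t * (\<Sum>e\<in>E2. h (c2 e))"
      using jensen_tr[OF hconv E1 eigdom[OF a E1] onbU] jensen_tr[OF hconv E2 eigdom[OF b E2] onbU] st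
      by (intro add_mono mult_left_mono) auto
    also have "\<dots> = s * (delta_R (A a) X)^2 + t * (delta_R (A b) X)^2"
      using phi[OF a E1] phi[OF b E2] by simp
    finally show "(delta_R (A (s *\<^sub>R a + t *\<^sub>R b)) X)^2 \<le> s * (delta_R (A a) X)^2 + t * (delta_R (A b) X)^2"
      unfolding g_def .
  qed
  then show ?thesis unfolding S_def A_def .
qed

end
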